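(* Let $\mathcal{C}=\{C_h\}$ be a channel over $\Sigma$, $h\in\Sigma^*$, $\lambda\ge1$ and $m=m_1\cdots m_\lambda\in\{0,1\}^\lambda$. If $f$ is drawn uniformly at random from the set of all Boolean functions on $\{1,\dots,\lambda\}\times\Sigma$, then $P^f_h(m)$ has exactly the same distribution as $c_1c_2\cdots c_\lambda$ where, successively, $c_i\sim C_{h\circ c_1\circ\cdots\circ c_{i-1}}$ independently.
   Context: $\Sigma$ is a finite alphabet; a channel is a family $\mathcal{C}=\{C_h\}_{h\in\Sigma^*}$ of probability distributions on $\Sigma$; $\circ$ denotes concatenation. For $g:\Sigma\to\{0,1\}$, $h\in\Sigma^*$, $b\in\{0,1\}$, the procedure $\mathtt{rejsam}^g_h(b)$ draws $c_1\sim C_h$; if $g(c_1)=b$ it outputs $c_1$; otherwise it draws $c_2\sim C_h$ independently and outputs $c_2$. For $f:\{1,\dots,\lambda\}\times\Sigma\to\{0,1\}$ write $f_i(\sigma)=f(i,\sigma)$. The procedure $P^f_h:\{0,1\}^\lambda\to\Sigma^\lambda$ on input $m=m_1\cdots m_\lambda$ does: for $i=1,\dots,\lambda$, set $c_i=\mathtt{rejsam}^{f_i}_h(m_i)$ and update $h\leftarrow h\circ c_i$; output $c_1\cdots c_\lambda$. *)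

theory Defs
  imports "HOL-Probability.Probability_Mass_Function"
begin

text \<open>Alphabet \<Sigma> is a finite type 'a; strings in \<Sigma>^* are lists; a channel is
  a map C from histories h to distributions C h on \<Sigma>; concatenation h \<circ> c is h @ [c].\<close>

definition rejsam :: "('a \<Rightarrow> bool) \<Rightarrow> 'a pmf \<Rightarrow> bool \<Rightarrow> 'a pmf" where
  "rejsam g D b = bind_pmf D (\<lambda>c1. if g c1 = b then return_pmf c1 else D)"

text \<open>P^f_h, processing message bits starting at index i; f is a function on
  index-symbol pairs, f_i(\<sigma>) = f (i, \<sigma>).\<close>
fun Pf :: "(nat \<times> 'a \<Rightarrow> bool) \<Rightarrow> ('a list \<Rightarrow> 'a pmf) \<Rightarrow> 'a list \<Rightarrow> nat \<Rightarrow> bool list \<Rightarrow> 'a list pmf" where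
  "Pf f C h i [] = return_pmf []"
| "Pf f C h i (b # bs) =
     bind_pmf (rejsam (\<lambda>\<sigma>. f (i, \<sigma>)) (C h) b)
       (\<lambda>c. bind_pmf (Pf f C (h @ [c]) (Suc i) bs) (\<lambda>cs. return_pmf (c # cs)))"

fun channel_sample :: "('a list \<Rightarrow> 'a pmf) \<Rightarrow> 'a list \<Rightarrow> nat \<Rightarrow> 'a list pmf" where
  "channel_sample C h 0 = return_pmf []"
| "channel_sample C h (Suc n) =
     bind_pmf (C h) (\<lambda>c. bind_pmf (channel_sample C (h @ [c]) n) (\<lambda>cs. return_pmf (c # cs)))"

text \<open>All Boolean functions on {1..\<lambda>} \<times> \<Sigma>, represented extensionally (False outside).\<close>
definition bool_funs :: "nat \<Rightarrow> (nat \<times> 'a \<Rightarrow> bool) set" where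
  "bool_funs lam = {f. \<forall>x. x \<notin> {1..lam} \<times> UNIV \<longrightarrow> f x = False}"

end

theory Submission
  imports Defs
begin

definition funs_on :: "nat set \<Rightarrow> (nat \<times> 'a \<Rightarrow> bool) set" where
  "funs_on I = {f. \<forall>x. fst x \<notin> I \<longrightarrow> f x = False}"

lemma funs_on_image: "funs_on I = (\<lambda>S x. x \<in> S) ` Pow (I \<times> UNIV)"
proof
  show "funs_on I \<subseteq> (\<lambda>S x. x \<in> S) ` Pow (I \<times> UNIV)"
  proof
    fix f assume f: "f \<in> funs_on I"
    have "f = (\<lambda>x. x \<in> {x. f x})" by auto
    moreover have "{x. f x} \<in> Pow (I \<times> UNIV)" using f by (auto simp: funs_on_def)
    ultimately show "f \<in> (\<lambda>S x. x \<in> S) ` Pow (I \<times> UNIV)" by blast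
  qed
  show "(\<lambda>S x. x \<in> S) ` Pow (I \<times> UNIV) \<subseteq> funs_on I"
    by (auto simp: funs_on_def)
qed

lemma funs_on_finite: "finite I \<Longrightarrow> finite (funs_on I :: (nat \<times> 'a::finite \<Rightarrow> bool) set)"
  unfolding funs_on_image by simp

lemma funs_on_ne: "funs_on I \<noteq> {}"
  unfolding funs_on_def by auto

lemma pair_pmf_of_set:
  assumes "finite A" "A \<noteq> {}" "finite B" "B \<noteq> {}"
  shows "pair_pmf (pmf_of_set A) (pmf_of_set B) = pmf_of_set (A \<times> B)"
proof (rule pmf_eqI)
  fix x :: "'a \<times> 'b"
  obtain a b where x: "x = (a, b)" by (cases x)
  have "A \<times> B \<noteq> {}" "finite (A \<times> B)" using assms by auto
  then show "pmf (pair_pmf (pmf_of_set A) (pmf_of_set B)) x = pmf (pmf_of_set (A \<times> B)) x"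
    using assms by (simp add: x pmf_pair card_cartesian_product indicator_def)
qed

lemma Pf_local:
  "(\<And>n a. n \<ge> j \<Longrightarrow> f (n, a) = f' (n, a)) \<Longrightarrow> Pf f C h j bs = Pf f' C h j bs"
proof (induction bs arbitrary: h j)
  case Nil then show ?case by simp
next
  case (Cons b bs)
  have g: "(\<lambda>\<sigma>. f (j, \<sigma>)) = (\<lambda>\<sigma>. f' (j, \<sigma>))" using Cons.prems by auto
  have "\<And>c. Pf f C (h @ [c]) (Suc j) bs = Pf f' C (h @ [c]) (Suc j) bs"
    by (rule Cons.IH) (use Cons.prems in auto)
  then show ?case by (simp add: g)
qed

lemma rejsam_pair:
  fixes D :: "'a::finite pmf"
  shows "pmf (rejsam g D b) c + pmf (rejsam (\<lambda>x. \<not> g x) D b) c = 2 * pmf D c"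
proof -
  have int: "\<And>f::'a \<Rightarrow> real. integrable (measure_pmf D) f"
    by (rule integrable_measure_pmf_finite) simp
  have "pmf (rejsam g D b) c + pmf (rejsam (\<lambda>x. \<not> g x) D b) c
      = (\<integral>x. pmf (if g x = b then return_pmf x else D) c + pmf (if (\<not> g x) = b then return_pmf x else D) c \<partial>measure_pmf D)"
    unfolding rejsam_def pmf_bind by (rule Bochner_Integration.integral_add[symmetric]; rule int)
  also have "\<dots> = (\<integral>x. indicator {c} x + pmf D c \<partial>measure_pmf D)"
    by (rule Bochner_Integration.integral_cong) (auto simp: pmf_return indicator_def)
  also have "\<dots> = (\<integral>x. indicator {c} x \<partial>measure_pmf D) + pmf D c"
    by (subst Bochner_Integration.integral_add) (auto intro: int)
  also have "\<dots> = 2 * pmf D c"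
    by (simp add: measure_pmf_single)
  finally show ?thesis .
qed

lemma rejsam_avg:
  fixes D :: "'a::finite pmf"
  shows "bind_pmf (pmf_of_set UNIV) (\<lambda>g. rejsam g D b) = D"
proof (rule pmf_eqI)
  fix c
  let ?F = "\<lambda>g. pmf (rejsam g D b) c"
  let ?U = "UNIV :: ('a \<Rightarrow> bool) set"
  have neg: "sum ?F ?U = sum (\<lambda>g. ?F (\<lambda>x. \<not> g x)) ?U"
    by (rule sum.reindex_bij_witness[where i="\<lambda>g x. \<not> g x" and j="\<lambda>g x. \<not> g x"]) auto
  have "2 * sum ?F ?U = sum (\<lambda>g. ?F g + ?F (\<lambda>x. \<not> g x)) ?U"
    by (simp add: sum.distrib neg[symmetric])
  also have "\<dots> = sum (\<lambda>g. 2 * pmf D c) ?U" by (simp add: rejsam_pair)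
  finally have "sum ?F ?U = card ?U * pmf D c" by simp
  moreover have "card ?U > 0" by (simp add: card_gt_0_iff)
  ultimately show "pmf (bind_pmf (pmf_of_set UNIV) (\<lambda>g. rejsam g D b)) c = pmf D c"
    unfolding pmf_bind by (simp add: integral_pmf_of_set)
qed

definition comb :: "nat \<Rightarrow> ('a \<Rightarrow> bool) \<times> (nat \<times> 'a \<Rightarrow> bool) \<Rightarrow> (nat \<times> 'a \<Rightarrow> bool)" where
  "comb i p = (\<lambda>(n, a). if n = i then fst p a else snd p (n, a))"

lemma funs_on_insert:
  fixes J :: "nat set" and i :: nat
  assumes "i \<notin> J"
  shows "funs_on (insert i J) = comb i ` (UNIV \<times> (funs_on J :: (nat \<times> 'a \<Rightarrow> bool) set))"
    and "inj_on (comb i) (UNIV \<times> (funs_on J :: (nat \<times> 'a \<Rightarrow> bool) set))"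
proof -
  show "funs_on (insert i J) = comb i ` (UNIV \<times> (funs_on J :: (nat \<times> 'a \<Rightarrow> bool) set))"
  proof
    show "funs_on (insert i J) \<subseteq> comb i ` (UNIV \<times> (funs_on J :: (nat \<times> 'a \<Rightarrow> bool) set))"
    proof
      fix f :: "nat \<times> 'a \<Rightarrow> bool" assume f: "f \<in> funs_on (insert i J)"
      let ?p = "(\<lambda>a. f (i, a), \<lambda>x. if fst x = i then False else f x)"
      have "f = comb i ?p" by (auto simp: comb_def)
      moreover have "?p \<in> UNIV \<times> funs_on J" using f by (auto simp: funs_on_def)
      ultimately show "f \<in> comb i ` (UNIV \<times> (funs_on J :: (nat \<times> 'a \<Rightarrow> bool) set))" by blast
    qed
    show "comb i ` (UNIV \<times> (funs_on J :: (nat \<times> 'a \<Rightarrow> bool) set)) \<subseteq> funs_on (insert i J)"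
      by (auto simp: funs_on_def comb_def)
  qed
  show "inj_on (comb i) (UNIV \<times> (funs_on J :: (nat \<times> 'a \<Rightarrow> bool) set))"
  proof (rule inj_onI)
    fix p q assume p: "p \<in> UNIV \<times> (funs_on J :: (nat \<times> 'a \<Rightarrow> bool) set)" and q: "q \<in> UNIV \<times> (funs_on J :: (nat \<times> 'a \<Rightarrow> bool) set)"
      and eq: "comb i p = comb i q"
    have "fst p = fst q"
    proof
      fix a show "fst p a = fst q a" using fun_cong[OF eq, of "(i, a)"] by (simp add: comb_def)
    qed
    moreover have "snd p = snd q"
    proof
      fix x :: "nat \<times> 'a"
      show "snd p x = snd q x"
      proof (cases "fst x = i")
        case True then show ?thesis using p q assms by (cases x) (auto simp: funs_on_def)
      next
        case False then show ?thesis using fun_cong[OF eq, of x]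
          by (cases x) (simp add: comb_def)
      qed
    qed
    ultimately show "p = q" by (simp add: prod_eq_iff)
  qed
qed

lemma main_gen:
  fixes C :: "('a::finite) list \<Rightarrow> 'a pmf"
  shows "bind_pmf (pmf_of_set (funs_on {i..<i + length bs})) (\<lambda>f. Pf f C h i bs)
         = channel_sample C h (length bs)"
proof (induction bs arbitrary: h i)
  case Nil then show ?case using funs_on_finite[of "{}"] funs_on_ne by simp
next
  case (Cons b bs)
  let ?J = "{Suc i..<Suc i + length bs}"
  have ins: "{i..<i + length (b # bs)} = insert i ?J" by auto
  have iJ: "i \<notin> ?J" by simp
  have fin: "finite (funs_on ?J :: (nat \<times> 'a \<Rightarrow> bool) set)" by (rule funs_on_finite) simp
  have U: "pmf_of_set (funs_on (insert i ?J)) =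
      map_pmf (comb i) (pair_pmf (pmf_of_set UNIV) (pmf_of_set (funs_on ?J :: (nat \<times> 'a \<Rightarrow> bool) set)))"
    apply (subst pair_pmf_of_set)
        apply (simp, simp, rule fin, rule funs_on_ne)
    apply (subst map_pmf_of_set_inj)
      apply (rule funs_on_insert(2)[OF iJ])
     apply (simp add: funs_on_ne)
     apply (simp add: fin[simplified])
    using funs_on_insert(1)[OF iJ, where 'a='a] by simp
  have step: "Pf (comb i (g, f')) C h i (b # bs) =
       bind_pmf (rejsam g (C h) b)
         (\<lambda>c. bind_pmf (Pf f' C (h @ [c]) (Suc i) bs) (\<lambda>cs. return_pmf (c # cs)))"
    for g f'
  proof -
    have "(\<lambda>\<sigma>. comb i (g, f') (i, \<sigma>)) = g" by (simp add: comb_def)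
    moreover have "\<And>c. Pf (comb i (g, f')) C (h @ [c]) (Suc i) bs = Pf f' C (h @ [c]) (Suc i) bs"
      by (rule Pf_local) (simp add: comb_def)
    ultimately show ?thesis by simp
  qed
  have "bind_pmf (pmf_of_set (funs_on {i..<i + length (b # bs)})) (\<lambda>f. Pf f C h i (b # bs))
      = bind_pmf (pmf_of_set UNIV) (\<lambda>g. bind_pmf (pmf_of_set (funs_on ?J)) (\<lambda>f'.
          bind_pmf (rejsam g (C h) b)
           (\<lambda>c. bind_pmf (Pf f' C (h @ [c]) (Suc i) bs) (\<lambda>cs. return_pmf (c # cs)))))"
    unfolding ins U by (simp add: map_pmf_def bind_assoc_pmf bind_return_pmf pair_pmf_def step del: Pf.simps)
  also have "\<dots> = bind_pmf (pmf_of_set UNIV) (\<lambda>g. bind_pmf (rejsam g (C h) b) (\<lambda>c.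
          bind_pmf (pmf_of_set (funs_on ?J)) (\<lambda>f'.
           bind_pmf (Pf f' C (h @ [c]) (Suc i) bs) (\<lambda>cs. return_pmf (c # cs)))))"
    by (subst bind_commute_pmf) (rule refl)
  also have "\<dots> = bind_pmf (pmf_of_set UNIV) (\<lambda>g. bind_pmf (rejsam g (C h) b) (\<lambda>c.
           bind_pmf (channel_sample C (h @ [c]) (length bs)) (\<lambda>cs. return_pmf (c # cs))))"
    by (simp add: bind_assoc_pmf[symmetric] Cons.IH[of "Suc i", simplified])
  also have "\<dots> = bind_pmf (C h) (\<lambda>c.
           bind_pmf (channel_sample C (h @ [c]) (length bs)) (\<lambda>cs. return_pmf (c # cs)))"
    by (simp add: bind_assoc_pmf[symmetric] rejsam_avg)
  also have "\<dots> = channel_sample C h (length (b # bs))" by simp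
  finally show ?case .
qed

theorem mainTheorem5:
  fixes C :: "('a::finite) list \<Rightarrow> 'a pmf" and h :: "'a list"
    and lam :: nat and m :: "bool list"
  assumes "lam \<ge> 1" and "length m = lam"
  shows "bind_pmf (pmf_of_set (bool_funs lam)) (\<lambda>f. Pf f C h 1 m) = channel_sample C h lam"
proof -
  have "bool_funs lam = (funs_on {1..<1 + length m} :: (nat \<times> 'a \<Rightarrow> bool) set)"
    using assms(2) by (auto simp: bool_funs_def funs_on_def)
  then show ?thesis using main_gen[of 1 m C h] assms(2) by simp
qed

end
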